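(* Let $p,p'\ge1$ with $|p-p'|=1$ and let $X=\alpha_{(p,p')}(Y)$ where $Y$ is a Sturmian word in which $bb$ does not occur. Then: (i) $|M_{(X,b)}\cap O_X|=1$; (ii) $|M_{(X,a)}\cap O_X|=(k+1)/2$, where $k$ is the (unique) odd element of $\{p-1,p'-1\}$; (iii) $|M_{(X,aa)}\cap O_X|=k/2$, where $k$ is the (unique) even element of $\{p-1,p'-1\}$; (iv) $|M_X\cap O_X|=\max(p,p')$.
   Context: $\alpha_{(p,p')}$ is the morphism $a\mapsto a^pb$, $b\mapsto a^{p'}b$. A Sturmian word is a right-infinite aperiodic word over $\{a,b\}$ with exactly $n+1$ factors of each length $n$. A palindrome $P$ is maximal in $X$ if $lPl'$ is a factor of $X$ for letters $l\neq l'$ (a maximal occurrence). $M_X$ is the set of distinct maximal palindromes of $X$; $M_{(X,a)}$, $M_{(X,b)}$, $M_{(X,aa)}$ are those whose center (middle letter for odd length, middle two letters for even length) is $a$, $b$, $aa$ respectively. A center occurrence is an occurrence of $a$, $b$ or $aa$. Write $Y=y_1y_2\cdots$, $X=\alpha(y_1)\alpha(y_2)\cdots$, $\alpha(y_j)$ at positions $s_j+1,\dots,s_j+|\alpha(y_j)|$, $s_j=\sum_{t<j}|\alpha(y_t)|$. The reflection of an occurrence $y_j=a$ (resp. $b$) is the center of the run $a^p$ (resp. $a^{p'}$) at positions $s_j+1,\dots,s_j+p$ (resp. $s_j+p'$); the reflection of an occurrence $y_jy_{j+1}=aa$ is the $b$ at position $s_j+p+1$. A center occurrence of $X$ is original if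 it is not the reflection of any center occurrence of $Y$. $O_X$ is the set of original palindromes: maximal palindromes of $X$ having a maximal occurrence whose center occurrence is original. *)

theory Defs
  imports Main
begin

text \<open>Letters of the alphabet {a,b}.  Infinite words are functions nat \<Rightarrow> letter,
  positions are 0-indexed (position i here is position i+1 in the paper).\<close>
datatype letter = La | Lb

definition occurs_at :: "(nat \<Rightarrow> letter) \<Rightarrow> letter list \<Rightarrow> nat \<Rightarrow> bool" where
  "occurs_at X w i \<longleftrightarrow> map X [i..<i + length w] = w"

definition is_factor :: "letter list \<Rightarrow> (nat \<Rightarrow> letter) \<Rightarrow> bool" where
  "is_factor w X \<longleftrightarrow> (\<exists>i. occurs_at X w i)"

definition ult_periodic :: "(nat \<Rightarrow> letter) \<Rightarrow> bool" where
  "ult_periodic X \<longleftrightarrow> (\<exists>q>0. \<exists>N. \<forall>i\<ge>N. X (i + q) = X i)"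

definition sturmian :: "(nat \<Rightarrow> letter) \<Rightarrow> bool" where
  "sturmian X \<longleftrightarrow> \<not> ult_periodic X \<and>
     (\<forall>n. card {w. length w = n \<and> is_factor w X} = n + 1)"

fun alpha :: "nat \<Rightarrow> nat \<Rightarrow> letter \<Rightarrow> letter list" where
  "alpha p p' La = replicate p La @ [Lb]"
| "alpha p p' Lb = replicate p' La @ [Lb]"

definition spos :: "nat \<Rightarrow> nat \<Rightarrow> (nat \<Rightarrow> letter) \<Rightarrow> nat \<Rightarrow> nat" where
  "spos p p' Y j = (\<Sum>t<j. length (alpha p p' (Y t)))"

text \<open>X = alpha(y_0) alpha(y_1) ... as an infinite word.\<close>
definition morph_word :: "nat \<Rightarrow> nat \<Rightarrow> (nat \<Rightarrow> letter) \<Rightarrow> nat \<Rightarrow> letter" where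
  "morph_word p p' Y n =
     (let j = (LEAST j. n < spos p p' Y (Suc j)) in alpha p p' (Y j) ! (n - spos p p' Y j))"

definition pal :: "letter list \<Rightarrow> bool" where
  "pal P \<longleftrightarrow> rev P = P"

definition max_occ :: "(nat \<Rightarrow> letter) \<Rightarrow> letter list \<Rightarrow> nat \<Rightarrow> bool" where
  "max_occ X P i \<longleftrightarrow> pal P \<and> occurs_at X P i \<and> 0 < i \<and> X (i - 1) \<noteq> X (i + length P)"

definition maxpals :: "(nat \<Rightarrow> letter) \<Rightarrow> letter list set" where
  "maxpals X = {P. \<exists>i. max_occ X P i}"

definition maxpals_a :: "(nat \<Rightarrow> letter) \<Rightarrow> letter list set" where
  "maxpals_a X = {P \<in> maxpals X. odd (length P) \<and> P ! (length P div 2) = La}"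

definition maxpals_b :: "(nat \<Rightarrow> letter) \<Rightarrow> letter list set" where
  "maxpals_b X = {P \<in> maxpals X. odd (length P) \<and> P ! (length P div 2) = Lb}"

definition maxpals_aa :: "(nat \<Rightarrow> letter) \<Rightarrow> letter list set" where
  "maxpals_aa X = {P \<in> maxpals X. even (length P) \<and> length P \<ge> 2 \<and>
      P ! (length P div 2 - 1) = La \<and> P ! (length P div 2) = La}"

text \<open>Center occurrences are encoded as (start position, length), length 1 for an
  occurrence of a or b, length 2 for an occurrence of aa.\<close>
definition is_center_occ :: "(nat \<Rightarrow> letter) \<Rightarrow> nat \<times> nat \<Rightarrow> bool" where
  "is_center_occ X c \<longleftrightarrow> snd c = 1 \<or>
     (snd c = 2 \<and> X (fst c) = La \<and> X (Suc (fst c)) = La)"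

definition center_occ :: "letter list \<Rightarrow> nat \<Rightarrow> nat \<times> nat" where
  "center_occ P i = (if odd (length P) then (i + length P div 2, 1)
                     else (i + length P div 2 - 1, 2))"

text \<open>For a single letter y_j, the
  center of the run of a's of length r (r = p for a, r = p' for b) occupying positions
  s_j, ..., s_j + r - 1; for y_j y_(j+1) = aa, the b at position s_j + p.\<close>
definition reflection :: "nat \<Rightarrow> nat \<Rightarrow> (nat \<Rightarrow> letter) \<Rightarrow> nat \<times> nat \<Rightarrow> nat \<times> nat" where
  "reflection p p' Y d =
     (let j = fst d in
      if snd d = 1 then
        (let r = (if Y j = La then p else p') in
          (spos p p' Y j + (r - 1) div 2, if odd r then 1 else 2))
      else (spos p p' Y j + p, 1))"

definition original :: "nat \<Rightarrow> nat \<Rightarrow> (nat \<Rightarrow> letter) \<Rightarrow> nat \<times> nat \<Rightarrow> bool" where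
  "original p p' Y c \<longleftrightarrow> is_center_occ (morph_word p p' Y) c \<and>
     \<not> (\<exists>d. is_center_occ Y d \<and> reflection p p' Y d = c)"

definition orig_pals :: "nat \<Rightarrow> nat \<Rightarrow> (nat \<Rightarrow> letter) \<Rightarrow> letter list set" where
  "orig_pals p p' Y = {P \<in> maxpals (morph_word p p' Y).
      \<exists>i. max_occ (morph_word p p' Y) P i \<and> P \<noteq> [] \<and> original p p' Y (center_occ P i)}"

end

theory Submission
  imports Defs
begin



definition rl :: "nat \<Rightarrow> nat \<Rightarrow> (nat \<Rightarrow> letter) \<Rightarrow> nat \<Rightarrow> nat" where
  "rl p p' Y j = (if Y j = La then p else p')"

lemma len_alpha: "length (alpha p p' y) = (if y = La then p else p') + 1"
  by (cases y) auto

lemma spos_0: "spos p p' Y 0 = 0" by (simp add: spos_def)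

lemma spos_Suc: "spos p p' Y (Suc j) = spos p p' Y j + rl p p' Y j + 1"
  by (simp add: spos_def rl_def len_alpha)

lemma spos_mono: "j \<le> j' \<Longrightarrow> spos p p' Y j \<le> spos p p' Y j'"
proof (induction j' rule: dec_induct)
  case base then show ?case by simp
next
  case (step n) then show ?case by (simp add: spos_Suc)
qed

lemma spos_smono: "j < j' \<Longrightarrow> spos p p' Y (Suc j) \<le> spos p p' Y j'"
  using spos_mono[of "Suc j" j'] by simp

lemma X_at:
  assumes "t \<le> rl p p' Y j"
  shows "morph_word p p' Y (spos p p' Y j + t) = (if t < rl p p' Y j then La else Lb)"
proof -
  let ?n = "spos p p' Y j + t"
  have L: "(LEAST j'. ?n < spos p p' Y (Suc j')) = j"
  proof (rule Least_equality)
    show "?n < spos p p' Y (Suc j)" using assms by (simp add: spos_Suc)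
  next
    fix y assume "?n < spos p p' Y (Suc y)"
    then show "j \<le> y" using spos_smono[of y j p p' Y] by (cases "y < j") auto
  qed
  have "alpha p p' (Y j) ! t = (if t < rl p p' Y j then La else Lb)"
    using assms by (cases "Y j") (auto simp: rl_def nth_append)
  then show ?thesis by (simp add: morph_word_def L)
qed

lemma decomp: "\<exists>j t. t \<le> rl p p' Y j \<and> n = spos p p' Y j + t"
proof (induction n)
  case 0 then show ?case by (rule exI[of _ 0], rule exI[of _ 0]) (simp add: spos_0)
next
  case (Suc n)
  then obtain j t where jt: "t \<le> rl p p' Y j" "n = spos p p' Y j + t" by blast
  show ?case
  proof (cases "t < rl p p' Y j")
    case True then show ?thesis using jt by (intro exI[of _ j] exI[of _ "Suc t"]) auto
  next
    case False then show ?thesis using jt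
      by (intro exI[of _ "Suc j"] exI[of _ 0]) (auto simp: spos_Suc)
  qed
qed

lemma decomp_uniq:
  assumes "t \<le> rl p p' Y j" "t' \<le> rl p p' Y j'" "spos p p' Y j + t = spos p p' Y j' + t'"
  shows "j = j' \<and> t = t'"
proof -
  have "\<not> j < j'" using spos_smono[of j j' p p' Y] assms by (auto simp: spos_Suc)
  moreover have "\<not> j' < j" using spos_smono[of j' j p p' Y] assms by (auto simp: spos_Suc)
  ultimately show ?thesis using assms by auto
qed

lemma X_before:
  assumes "j > 0" shows "morph_word p p' Y (spos p p' Y j - 1) = Lb"
proof -
  obtain j0 where "j = Suc j0" using assms by (cases j) auto
  then have "spos p p' Y j - 1 = spos p p' Y j0 + rl p p' Y j0" by (simp add: spos_Suc)
  then show ?thesis using X_at[of "rl p p' Y j0" p p' Y j0] by simp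
qed




lemma maxocc_sym:
  assumes "max_occ X P i" "length P = 2*h+1+e"
  shows "(\<forall>k\<le>h. X(i+h-k) = X(i+h+e+k)) \<and> 0<i \<and> X(i-1) \<noteq> X(i+(2*h+1+e))
         \<and> P = map X [i..<i+(2*h+1+e)]"
proof -
  have occ: "map X [i..<i+length P] = P" and pal: "rev P = P" and i: "0<i"
    and mx: "X (i - 1) \<noteq> X (i + length P)"
    using assms(1) by (auto simp: max_occ_def occurs_at_def pal_def)
  have nth: "\<And>k. k < length P \<Longrightarrow> P ! k = X (i+k)"
    using occ by (metis add_diff_cancel_left' length_map length_upt nth_map_upt)
  have "X(i+h-k) = X(i+h+e+k)" if "k \<le> h" for k
  proof -
    have "rev P ! (h-k) = P ! (h-k)" using pal by simp
    moreover have "rev P ! (h-k) = P ! (length P - Suc (h-k))"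
      using that assms(2) by (simp add: rev_nth)
    moreover have "length P - Suc (h-k) = h+e+k" using that assms(2) by simp
    ultimately have "P ! (h+e+k) = P ! (h-k)" by simp
    then show ?thesis using nth[of "h+e+k"] nth[of "h-k"] that assms(2) by (simp add: add.assoc)
  qed
  then show ?thesis using i mx occ assms(2) by auto
qed

lemma radius:
  fixes X :: "nat \<Rightarrow> letter"
  assumes Ll: "\<And>k. 1\<le>k \<Longrightarrow> k\<le>L \<Longrightarrow> X(c-k) = La" and "L \<le> c"
    and Le: "c > L \<Longrightarrow> X(c-L-1) = Lb"
    and Rr: "\<And>k. 1\<le>k \<Longrightarrow> k\<le>R \<Longrightarrow> X(c+e+k) = La" and Re: "X(c+e+R+1) = Lb"
    and "L \<noteq> R"
    and sym: "\<And>k. k \<le> h \<Longrightarrow> X(c-k) = X(c+e+k)" and "h < c"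
    and mx: "X(c-h-1) \<noteq> X(c+e+h+1)"
  shows "h = min L R"
proof (rule ccontr)
  assume ne: "h \<noteq> min L R"
  show False
  proof (cases "h < min L R")
    case True
    then have "X(c-(h+1)) = La" "X(c+e+(h+1)) = La" using Ll[of "h+1"] Rr[of "h+1"] by auto
    then show False using mx by (simp add: add.assoc)
  next
    case False
    then have hm: "min L R < h" using ne by linarith
    show False
    proof (cases "L < R")
      case True
      then have "X(c-(L+1)) = Lb" using Le hm \<open>h<c\<close> by simp
      moreover have "X(c+e+(L+1)) = La" using Rr[of "L+1"] True by simp
      moreover have "X(c-(L+1)) = X(c+e+(L+1))" using sym[of "L+1"] hm True by simp
      ultimately show False by simp
    next
      case False
      then have RL: "R < L" using \<open>L\<noteq>R\<close> by simp
      then have "X(c-(R+1)) = La" using Ll[of "R+1"] by simp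
      moreover have "X(c+e+(R+1)) = Lb" using Re by (simp add: add.assoc)
      moreover have "X(c-(R+1)) = X(c+e+(R+1))" using sym[of "R+1"] hm RL by simp
      ultimately show False by simp
    qed
  qed
qed




lemma map_const: "(\<And>x. x \<in> set xs \<Longrightarrow> f x = a) \<Longrightarrow> map f xs = replicate (length xs) a"
  by (induction xs) auto

locale L5 =
  fixes p p' :: nat and Y :: "nat \<Rightarrow> letter"
  assumes p1: "p \<ge> 1" and p1': "p' \<ge> 1" and pne: "p \<noteq> p'"
    and noBB: "\<not> (\<exists>i. Y i = Lb \<and> Y (Suc i) = Lb)"
begin

abbreviation "X \<equiv> morph_word p p' Y"
abbreviation "S \<equiv> spos p p' Y"
abbreviation "r \<equiv> rl p p' Y"

lemma r_pos: "r j \<ge> 1" using p1 p1' by (simp add: rl_def)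
lemma r_le: "r j \<le> max p p'" by (simp add: rl_def)

lemma in_run: "S j \<le> x \<Longrightarrow> x < S j + r j \<Longrightarrow> X x = La"
  using X_at[of "x - S j" p p' Y j] by simp

lemma at_end: "X (S j + r j) = Lb"
  using X_at[of "r j" p p' Y j] by simp

lemma left_end: "c = S j + t \<Longrightarrow> c > t \<Longrightarrow> X (c - t - 1) = Lb"
  using X_before[of j p p' Y] by (cases "j = 0") (auto simp: spos_0)

lemma sub_a:
  assumes "P \<in> maxpals_a X \<inter> orig_pals p p' Y"
  shows "\<exists>m. odd m \<and> m < max p p' \<and> P = replicate m La"
proof -
  obtain i where mo: "max_occ X P i" and orig: "original p p' Y (center_occ P i)"
    using assms by (auto simp: orig_pals_def)
  have odd: "odd (length P)" and mid: "P ! (length P div 2) = La"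
    using assms by (auto simp: maxpals_a_def)
  define h where "h = length P div 2"
  have lenP: "length P = 2*h+1+0" using odd h_def by simp
  note ms = maxocc_sym[OF mo lenP]
  define c where "c = i + h"
  have co: "center_occ P i = (c, 1)" using odd by (simp add: center_occ_def c_def h_def)
  have Peq: "P = map X [i..<i+(2*h+1+0)]" using ms by blast
  have "P ! h = X (i + h)" by (subst Peq, subst nth_map_upt) auto
  then have Xc: "X c = La" using mid by (simp add: c_def h_def[symmetric])
  obtain j t where jt: "t \<le> r j" "c = S j + t" using decomp by blast
  have tr: "t < r j" using Xc jt X_at[of t p p' Y j] by (auto split: if_splits)
  have nm: "\<not> (odd (r j) \<and> t = (r j - 1) div 2)"
  proof
    assume a: "odd (r j) \<and> t = (r j - 1) div 2"
    have "is_center_occ Y (j, 1)" by (simp add: is_center_occ_def)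
    moreover have "reflection p p' Y (j, 1) = (c, 1)"
      using a jt by (simp add: reflection_def rl_def Let_def)
    ultimately show False using orig co by (auto simp: original_def)
  qed
  have neq: "t \<noteq> r j - 1 - t" using nm tr by presburger
  have hm: "h = min t (r j - 1 - t)"
  proof (rule radius[where X=X and c=c and e=0])
    show "X (c - k) = La" if "1 \<le> k" "k \<le> t" for k using that jt tr by (intro in_run[of j]) auto
    show "t \<le> c" using jt by simp
    show "X (c - t - 1) = Lb" if "c > t" using left_end that jt by simp
    show "X (c + 0 + k) = La" if "1 \<le> k" "k \<le> r j - 1 - t" for k
      using that jt tr by (intro in_run[of j]) auto
    show "X (c + 0 + (r j - 1 - t) + 1) = Lb" using jt tr at_end[of j] by simp
    show "t \<noteq> r j - 1 - t" using neq .
    show "X (c - k) = X (c + 0 + k)" if "k \<le> h" for k using ms that by (simp add: c_def)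
    show "h < c" using ms by (simp add: c_def)
    have e1: "c-h-1 = i-1" and e2: "c+0+h+1 = i+(2*h+1+0)" by (simp_all add: c_def)
    show "X (c - h - 1) \<noteq> X (c + 0 + h + 1)" using ms unfolding e1 e2 by blast
  qed
  have "P = replicate (2*h+1) La"
  proof -
    have "P = map X [i..<i+(2*h+1+0)]" using ms by simp
    also have "\<dots> = replicate (2*h+1) La"
      by (subst map_const[where a=La]) (use hm jt tr c_def in \<open>auto intro!: in_run[of j]\<close>)
    finally show ?thesis .
  qed
  moreover have "2*h+1 < r j" using hm neq tr by (auto simp: min_def)
  then have "2*h+1 < max p p'" using r_le[of j] by linarith
  ultimately show ?thesis by (intro exI[of _ "2*h+1"]) simp
qed

end


context L5 begin

lemma sub_aa:
  assumes "P \<in> maxpals_aa X \<inter> orig_pals p p' Y"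
  shows "\<exists>m. even m \<and> 2 \<le> m \<and> m < max p p' \<and> P = replicate m La"
proof -
  obtain i where mo: "max_occ X P i" and orig: "original p p' Y (center_occ P i)"
    using assms by (auto simp: orig_pals_def)
  have ev: "even (length P)" and l2: "length P \<ge> 2" and mid: "P ! (length P div 2 - 1) = La"
    "P ! (length P div 2) = La"
    using assms by (auto simp: maxpals_aa_def)
  define h where "h = length P div 2 - 1"
  have lenP: "length P = 2*h+1+1" using ev l2 h_def by auto
  note ms = maxocc_sym[OF mo lenP]
  define c where "c = i + h"
  have co: "center_occ P i = (c, 2)" using ev lenP by (simp add: center_occ_def c_def)
  have Peq: "P = map X [i..<i+(2*h+1+1)]" using ms by blast
  have "P ! h = X (i + h)" by (subst Peq, subst nth_map_upt) auto
  then have Xc: "X c = La" using mid(1) by (simp add: c_def h_def)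
  have "P ! (h+1) = X (i + (h+1))" by (subst Peq, subst nth_map_upt) auto
  moreover have "length P div 2 = h + 1" using lenP by simp
  ultimately have Xc1: "X (c+1) = La" using mid by (simp add: c_def)
  obtain j t where jt: "t \<le> r j" "c = S j + t" using decomp by blast
  have tr: "t < r j" using Xc jt X_at[of t p p' Y j] by (auto split: if_splits)
  have tr1: "t + 1 < r j"
  proof (rule ccontr)
    assume "\<not> t + 1 < r j"
    then have "c + 1 = S j + r j" using jt tr by simp
    then show False using Xc1 at_end[of j] by simp
  qed
  have nm: "\<not> (even (r j) \<and> t = (r j - 1) div 2)"
  proof
    assume a: "even (r j) \<and> t = (r j - 1) div 2"
    have "is_center_occ Y (j, 1)" by (simp add: is_center_occ_def)
    moreover have "reflection p p' Y (j, 1) = (c, 2)"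
      using a jt by (simp add: reflection_def rl_def Let_def)
    ultimately show False using orig co by (auto simp: original_def)
  qed
  have neq: "t \<noteq> r j - 2 - t"
  proof
    assume a: "t = r j - 2 - t"
    then have "r j = 2*t+2" using tr1 by linarith
    then have "even (r j) \<and> t = (r j - 1) div 2" by simp
    then show False using nm by blast
  qed
  have hm: "h = min t (r j - 2 - t)"
  proof (rule radius[where X=X and c=c and e=1])
    show "X (c - k) = La" if "1 \<le> k" "k \<le> t" for k using that jt tr by (intro in_run[of j]) auto
    show "t \<le> c" using jt by simp
    show "X (c - t - 1) = Lb" if "c > t" using left_end that jt by simp
    show "X (c + 1 + k) = La" if "1 \<le> k" "k \<le> r j - 2 - t" for k
      using that jt tr1 by (intro in_run[of j]) auto
    have eq: "c + 1 + (r j - 2 - t) + 1 = S j + r j" using jt tr1 by simp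
    show "X (c + 1 + (r j - 2 - t) + 1) = Lb" unfolding eq by (rule at_end)
    show "t \<noteq> r j - 2 - t" using neq .
    show "X (c - k) = X (c + 1 + k)" if "k \<le> h" for k using ms that by (simp add: c_def)
    show "h < c" using ms by (simp add: c_def)
    have e1: "c-h-1 = i-1" and e2: "c+1+h+1 = i+(2*h+1+1)" by (simp_all add: c_def)
    show "X (c - h - 1) \<noteq> X (c + 1 + h + 1)" using ms unfolding e1 e2 by blast
  qed
  have "P = replicate (2*h+2) La"
  proof -
    have "P = map X [i..<i+(2*h+1+1)]" using ms by simp
    also have "\<dots> = replicate (2*h+2) La"
      by (subst map_const[where a=La]) (use hm jt tr1 c_def in \<open>auto intro!: in_run[of j]\<close>)
    finally show ?thesis .
  qed
  moreover have "2*h+2 < r j" using hm neq tr1 by (auto simp: min_def)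
  then have "2*h+2 < max p p'" using r_le[of j] by linarith
  ultimately show ?thesis by (intro exI[of _ "2*h+2"]) simp
qed

lemma r_min: "Y j \<noteq> Y (Suc j) \<Longrightarrow> min (r j) (r (Suc j)) = min p p'"
  by (cases "Y j"; cases "Y (Suc j)") (auto simp: rl_def)

lemma r_ne: "Y j \<noteq> Y (Suc j) \<Longrightarrow> r j \<noteq> r (Suc j)"
  using pne by (cases "Y j"; cases "Y (Suc j)") (auto simp: rl_def)

lemma sub_b:
  assumes "P \<in> maxpals_b X \<inter> orig_pals p p' Y"
  shows "P = replicate (min p p') La @ [Lb] @ replicate (min p p') La"
proof -
  obtain i where mo: "max_occ X P i" and orig: "original p p' Y (center_occ P i)"
    using assms by (auto simp: orig_pals_def)
  have odd: "odd (length P)" and mid: "P ! (length P div 2) = Lb"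
    using assms by (auto simp: maxpals_b_def)
  define h where "h = length P div 2"
  have lenP: "length P = 2*h+1+0" using odd h_def by simp
  note ms = maxocc_sym[OF mo lenP]
  define c where "c = i + h"
  have co: "center_occ P i = (c, 1)" using odd by (simp add: center_occ_def c_def h_def)
  have Peq: "P = map X [i..<i+(2*h+1+0)]" using ms by blast
  have "P ! h = X (i + h)" by (subst Peq, subst nth_map_upt) auto
  then have Xc: "X c = Lb" using mid by (simp add: c_def h_def[symmetric])
  obtain j t where jt: "t \<le> r j" "c = S j + t" using decomp by blast
  have tr: "t = r j" using Xc jt X_at[of t p p' Y j] by (auto split: if_splits)
  have nab: "\<not> (Y j = La \<and> Y (Suc j) = La)"
  proof
    assume a: "Y j = La \<and> Y (Suc j) = La"
    have "is_center_occ Y (j, 2)" using a by (simp add: is_center_occ_def)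
    moreover have "reflection p p' Y (j, 2) = (c, 1)"
      using a jt tr by (simp add: reflection_def rl_def Let_def)
    ultimately show False using orig co by (auto simp: original_def)
  qed
  have ne: "Y j \<noteq> Y (Suc j)" using nab noBB by (cases "Y j"; cases "Y (Suc j)") auto
  have cS: "c + 1 = S (Suc j)" using jt tr by (simp add: spos_Suc)
  have hm: "h = min (r j) (r (Suc j))"
  proof (rule radius[where X=X and c=c and e=0])
    show "X (c - k) = La" if "1 \<le> k" "k \<le> r j" for k using that jt tr by (intro in_run[of j]) auto
    show "r j \<le> c" using jt tr by simp
    show "X (c - r j - 1) = Lb" if "c > r j" using left_end that jt tr by simp
    show "X (c + 0 + k) = La" if "1 \<le> k" "k \<le> r (Suc j)" for k
      using that cS by (intro in_run[of "Suc j"]) auto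
    have eq: "c + 0 + r (Suc j) + 1 = S (Suc j) + r (Suc j)" using cS by simp
    show "X (c + 0 + r (Suc j) + 1) = Lb" unfolding eq by (rule at_end)
    show "r j \<noteq> r (Suc j)" using r_ne[OF ne] .
    show "X (c - k) = X (c + 0 + k)" if "k \<le> h" for k using ms that by (simp add: c_def)
    show "h < c" using ms by (simp add: c_def)
    have e1: "c-h-1 = i-1" and e2: "c+0+h+1 = i+(2*h+1+0)" by (simp_all add: c_def)
    show "X (c - h - 1) \<noteq> X (c + 0 + h + 1)" using ms unfolding e1 e2 by blast
  qed
  have hmin: "h = min p p'" using hm r_min[OF ne] by simp
  have "P = replicate h La @ [Lb] @ replicate h La"
  proof (rule nth_equalityI)
    show "length P = length (replicate h La @ [Lb] @ replicate h La)" using lenP by simp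
    fix k assume k: "k < length P"
    have Pk: "P ! k = X (i + k)" using k lenP by (subst Peq, subst nth_map_upt) auto
    show "P ! k = (replicate h La @ [Lb] @ replicate h La) ! k"
    proof (cases "k < h")
      case True
      have "X (i + k) = La" using True hm jt tr c_def by (intro in_run[of j]) auto
      then show ?thesis using Pk True by (simp add: nth_append)
    next
      case False
      show ?thesis
      proof (cases "k = h")
        case True then show ?thesis using Pk Xc c_def by (simp add: nth_append)
      next
        case False2: False
        then have kh: "h < k" using False by simp
        have "X (i + k) = La" using kh k lenP hm cS c_def by (intro in_run[of "Suc j"]) auto
        then show ?thesis using Pk kh k lenP by (simp add: nth_append)
      qed
    qed
  qed
  then show ?thesis using hmin by simp
qed

end


context L5 begin

lemma S_pos: "j \<ge> 1 \<Longrightarrow> S j > 0"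
  using spos_mono[of 1 j p p' Y] by (simp add: spos_Suc spos_0)

lemma occ_run: "m \<le> r j \<Longrightarrow> occurs_at X (replicate m La) (S j)"
  unfolding occurs_at_def by (subst map_const[where a=La]) (auto intro!: in_run[of j])

lemma refl_cases:
  assumes "is_center_occ Y d" "reflection p p' Y d = c"
  obtains j' where "snd c = 1" "odd (r j')" "fst c = S j' + (r j' - 1) div 2"
  | j' where "snd c = 2" "even (r j')" "fst c = S j' + (r j' - 1) div 2"
  | j' where "snd c = 1" "Y j' = La" "Y (Suc j') = La" "fst c = S j' + r j'"
proof -
  obtain j' e where d: "d = (j', e)" by (cases d)
  show ?thesis
  proof (cases "e = 1")
    case True
    then show ?thesis using that(1,2) assms d
      by (cases "odd (r j')") (auto simp: reflection_def rl_def Let_def)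
  next
    case False
    then have "e = 2" "Y j' = La" "Y (Suc j') = La" using assms(1) d by (auto simp: is_center_occ_def)
    then show ?thesis using that(3)[of j'] assms d False by (auto simp: reflection_def rl_def Let_def)
  qed
qed

lemma mid_in_run: "(r j - 1) div 2 < r j" using r_pos[of j] by simp

lemma sup_a:
  assumes j: "j \<ge> 1" "r j = max p p'" and m: "odd m" "m < max p p'"
  shows "replicate m La \<in> maxpals_a X \<inter> orig_pals p p' Y"
proof -
  let ?P = "replicate m La"
  have mo: "max_occ X ?P (S j)"
    unfolding max_occ_def pal_def
    using occ_run[of m j] S_pos[OF j(1)] X_before[of j p p' Y] in_run[of j "S j + m"] j m by auto
  have co: "center_occ ?P (S j) = (S j + m div 2, 1)" using m by (simp add: center_occ_def)
  have Xc: "X (S j + m div 2) = La" using j m by (intro in_run[of j]) auto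
  have orig: "original p p' Y (S j + m div 2, 1)"
    unfolding original_def
  proof (intro conjI notI)
    show "is_center_occ X (S j + m div 2, 1)" by (simp add: is_center_occ_def)
    assume "\<exists>d. is_center_occ Y d \<and> reflection p p' Y d = (S j + m div 2, 1)"
    then obtain d where d: "is_center_occ Y d" "reflection p p' Y d = (S j + m div 2, 1)" by blast
    show False
    proof (rule refl_cases[OF d])
      fix j' assume a: "snd (S j + m div 2, 1) = 1" "odd (r j')"
        "fst (S j + m div 2, 1) = S j' + (r j' - 1) div 2"
      have "m div 2 \<le> r j" using j m by simp
      then have "j' = j \<and> (r j' - 1) div 2 = m div 2"
        using decomp_uniq[of "(r j' - 1) div 2" p p' Y j' "m div 2" j] a mid_in_run[of j'] by auto
      then have "odd (r j)" "(r j - 1) div 2 = m div 2" "m < r j" using a j m by auto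
      then show False using m(1) by (auto elim!: oddE)
    next
      fix j' assume "snd (S j + m div 2, 1::nat) = 2" then show False by simp
    next
      fix j' assume a: "Y j' = La" "fst (S j + m div 2, 1) = S j' + r j'"
      then show False using Xc at_end[of j'] by simp
    qed
  qed
  have m0: "0 < m" "m div 2 < m" using m by (auto elim: oddE)
  have "replicate m La ! (m div 2) = La" using m0 by simp
  moreover have "replicate m La \<in> maxpals X" using mo by (auto simp: maxpals_def)
  moreover have "replicate m La \<in> orig_pals p p' Y" unfolding orig_pals_def
    using mo co orig m0 \<open>replicate m La \<in> maxpals X\<close> by auto
  ultimately show ?thesis using m by (auto simp: maxpals_a_def)
qed

lemma sup_aa:
  assumes j: "j \<ge> 1" "r j = max p p'" and m: "even m" "2 \<le> m" "m < max p p'"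
  shows "replicate m La \<in> maxpals_aa X \<inter> orig_pals p p' Y"
proof -
  let ?P = "replicate m La"
  have mo: "max_occ X ?P (S j)"
    unfolding max_occ_def pal_def
    using occ_run[of m j] S_pos[OF j(1)] X_before[of j p p' Y] in_run[of j "S j + m"] j m by auto
  have co: "center_occ ?P (S j) = (S j + m div 2 - 1, 2)" using m by (simp add: center_occ_def)
  have Xc: "X (S j + m div 2 - 1) = La" "X (Suc (S j + m div 2 - 1)) = La"
    using j m by (auto intro!: in_run[of j])
  have orig: "original p p' Y (S j + m div 2 - 1, 2)"
    unfolding original_def
  proof (intro conjI notI)
    show "is_center_occ X (S j + m div 2 - 1, 2)" using Xc by (simp add: is_center_occ_def)
    assume "\<exists>d. is_center_occ Y d \<and> reflection p p' Y d = (S j + m div 2 - 1, 2)"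
    then obtain d where d: "is_center_occ Y d" "reflection p p' Y d = (S j + m div 2 - 1, 2)" by blast
    show False
    proof (rule refl_cases[OF d])
      fix j' assume "snd (S j + m div 2 - 1, 2::nat) = 1" then show False by simp
    next
      fix j' assume a: "snd (S j + m div 2 - 1, 2) = 2" "even (r j')"
        "fst (S j + m div 2 - 1, 2) = S j' + (r j' - 1) div 2"
      have "m div 2 - 1 \<le> r j" using j m by simp
      then have "j' = j \<and> (r j' - 1) div 2 = m div 2 - 1"
        using decomp_uniq[of "(r j' - 1) div 2" p p' Y j' "m div 2 - 1" j] a mid_in_run[of j'] m
        by auto
      then have "even (r j)" "(r j - 1) div 2 = m div 2 - 1" "m < r j" using a j m by auto
      then show False using m(1,2) by presburger
    next
      fix j' assume "snd (S j + m div 2 - 1, 2::nat) = 1" then show False by simp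
    qed
  qed
  have m0: "0 < m" "m div 2 < m" "m div 2 - 1 < m" using m by auto
  have "replicate m La ! (m div 2) = La" "replicate m La ! (m div 2 - 1) = La" using m0 by simp_all
  moreover have "replicate m La \<in> maxpals X" using mo by (auto simp: maxpals_def)
  moreover have "replicate m La \<in> orig_pals p p' Y" unfolding orig_pals_def
    using mo co orig m0 \<open>replicate m La \<in> maxpals X\<close> by auto
  ultimately show ?thesis using m by (auto simp: maxpals_aa_def)
qed

end


context L5 begin

lemma sup_b:
  assumes j: "j \<ge> 1" "Y j \<noteq> Y (Suc j)"
  shows "replicate (min p p') La @ [Lb] @ replicate (min p p') La \<in> maxpals_b X \<inter> orig_pals p p' Y"
proof -
  define m0 where "m0 = min p p'"
  let ?P = "replicate m0 La @ [Lb] @ replicate m0 La"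
  define i where "i = S j + r j - m0"
  have mn: "min (r j) (r (Suc j)) = m0" using r_min[OF j(2)] m0_def by simp
  have rne: "r j \<noteq> r (Suc j)" using r_ne[OF j(2)] .
  have m1: "m0 \<le> r j" "m0 \<le> r (Suc j)" using mn by auto
  have SS: "S (Suc j) = S j + r j + 1" by (simp add: spos_Suc)
  have lenP: "length ?P = 2*m0+1" by simp
  have occ: "map X [i..<i+(2*m0+1)] = ?P"
  proof (rule nth_equalityI)
    show "length (map X [i..<i+(2*m0+1)]) = length ?P" by simp
    fix k assume k: "k < length (map X [i..<i+(2*m0+1)])"
    then have k': "k < 2*m0+1" by simp
    have L: "map X [i..<i+(2*m0+1)] ! k = X (i+k)" using k' by (subst nth_map_upt) auto
    show "map X [i..<i+(2*m0+1)] ! k = ?P ! k"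
    proof (cases "k < m0")
      case True
      have "X (i+k) = La" using True m1 i_def by (intro in_run[of j]) auto
      then show ?thesis using L True by (simp add: nth_append)
    next
      case False
      show ?thesis
      proof (cases "k = m0")
        case True
        have "i + k = S j + r j" using True m1 i_def by simp
        then show ?thesis using L True at_end[of j] by (simp add: nth_append)
      next
        case False2: False
        then have kh: "m0 < k" using False by simp
        have "i + k = S (Suc j) + (k - m0 - 1)" using kh m1 i_def SS by simp
        moreover have "X (S (Suc j) + (k - m0 - 1)) = La" using kh k' m1 by (intro in_run[of "Suc j"]) auto
        ultimately show ?thesis using L kh k' by (simp add: nth_append)
      qed
    qed
  qed
  have ipos: "0 < i" using S_pos[OF j(1)] m1 i_def by simp
  have mx: "X (i - 1) \<noteq> X (i + (2*m0+1))"
  proof (cases "r j = m0")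
    case True
    then have "i = S j" using i_def by simp
    then have "X (i - 1) = Lb" using X_before[of j p p' Y] j by simp
    moreover have "r (Suc j) > m0" using True rne m1 by simp
    then have "X (i + (2*m0+1)) = La" using i_def True SS by (intro in_run[of "Suc j"]) auto
    ultimately show ?thesis by simp
  next
    case False
    then have rs: "r (Suc j) = m0" using mn by (auto simp: min_def split: if_splits)
    have "X (i - 1) = La" using False m1 i_def by (intro in_run[of j]) auto
    moreover have "i + (2*m0+1) = S (Suc j) + r (Suc j)" using rs m1 i_def SS by simp
    then have "X (i + (2*m0+1)) = Lb" using at_end[of "Suc j"] by simp
    ultimately show ?thesis by simp
  qed
  have mo: "max_occ X ?P i"
    unfolding max_occ_def pal_def occurs_at_def unfolding lenP using occ ipos mx by simp
  have co: "center_occ ?P i = (S j + r j, 1)" using m1 i_def by (simp add: center_occ_def)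
  have orig: "original p p' Y (S j + r j, 1)"
    unfolding original_def
  proof (intro conjI notI)
    show "is_center_occ X (S j + r j, 1)" by (simp add: is_center_occ_def)
    assume "\<exists>d. is_center_occ Y d \<and> reflection p p' Y d = (S j + r j, 1)"
    then obtain d where d: "is_center_occ Y d" "reflection p p' Y d = (S j + r j, 1)" by blast
    show False
    proof (rule refl_cases[OF d])
      fix j' assume a: "fst (S j + r j, 1::nat) = S j' + (r j' - 1) div 2"
      have "X (S j' + (r j' - 1) div 2) = La" using mid_in_run[of j'] by (intro in_run[of j']) auto
      then show False using a at_end[of j] by simp
    next
      fix j' assume "snd (S j + r j, 1::nat) = 2" then show False by simp
    next
      fix j' assume a: "Y j' = La" "Y (Suc j') = La" "fst (S j + r j, 1::nat) = S j' + r j'"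
      then have "j' = j" using decomp_uniq[of "r j'" p p' Y j' "r j" j] by auto
      then show False using a j(2) by simp
    qed
  qed
  have inM: "?P \<in> maxpals X" using mo by (auto simp: maxpals_def)
  have "?P \<in> orig_pals p p' Y" unfolding orig_pals_def using inM mo co orig by auto
  moreover have "?P ! (length ?P div 2) = Lb" by (simp add: nth_append)
  ultimately show ?thesis using inM unfolding m0_def[symmetric] by (auto simp: maxpals_b_def)
qed

end


context L5 begin

lemma union3:
  "maxpals X \<inter> orig_pals p p' Y =
   (maxpals_a X \<inter> orig_pals p p' Y) \<union> (maxpals_aa X \<inter> orig_pals p p' Y) \<union> (maxpals_b X \<inter> orig_pals p p' Y)" (is "?A = ?B")
proof
  show "?A \<subseteq> ?B"
  proof
    fix P assume PP: "P \<in> maxpals X \<inter> orig_pals p p' Y"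
    then obtain i where mo: "max_occ X P i" and ne: "P \<noteq> []" by (auto simp: orig_pals_def)
    show "P \<in> (maxpals_a X \<inter> orig_pals p p' Y) \<union> (maxpals_aa X \<inter> orig_pals p p' Y) \<union> (maxpals_b X \<inter> orig_pals p p' Y)"
    proof (cases "odd (length P)")
      case True
      show ?thesis
      proof (cases "P ! (length P div 2)")
        case La
        then have "P \<in> maxpals_a X" using PP True unfolding maxpals_a_def by blast
        then show ?thesis using PP by blast
      next
        case Lb
        then have "P \<in> maxpals_b X" using PP True unfolding maxpals_b_def by blast
        then show ?thesis using PP by blast
      qed
    next
      case False
      define h where "h = length P div 2 - 1"
      have l2: "length P \<ge> 2" 
      proof -
        have "length P \<noteq> 0" using ne by simp
        then show ?thesis using False by (cases "length P"; cases "length P - 1") auto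
      qed
      have lenP: "length P = 2*h+1+1" using False l2 h_def by auto
      note ms = maxocc_sym[OF mo lenP]
      have Peq: "P = map X [i..<i+(2*h+1+1)]" using ms by blast
      have n1: "P ! h = X (i + h)" by (subst Peq, subst nth_map_upt) auto
      have n2: "P ! (h+1) = X (i + (h+1))" by (subst Peq, subst nth_map_upt) auto
      have al: "\<forall>k\<le>h. X(i+h-k) = X(i+h+1+k)" using ms by (elim conjE)
      have "X(i+h-0) = X(i+h+1+0)" using al le0 by blast
      then have eqx: "X (i+h) = X (i + h + 1 + 0)" by simp
      have "X (i + h) = La"
      proof (rule ccontr)
        assume "X (i+h) \<noteq> La"
        then have xb: "X (i+h) = Lb" by (cases "X (i+h)") auto
        obtain j t where jt: "t \<le> r j" "i + h = S j + t" using decomp by blast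
        have "t = r j" using xb jt X_at[of t p p' Y j] by (auto split: if_splits)
        then have "i + h + 1 = S (Suc j) + 0" using jt by (simp add: spos_Suc)
        then have "X (i+h+1) = La" using in_run[of "Suc j" "S (Suc j) + 0"] r_pos[of "Suc j"] by simp
        then show False using xb eqx by simp
      qed
      moreover have "length P div 2 = h + 1" using lenP by simp
      ultimately have "P ! (length P div 2 - 1) = La" "P ! (length P div 2) = La"
        using n1 n2 eqx by simp_all
      then have "P \<in> maxpals_aa X" using PP l2 False unfolding maxpals_aa_def by blast
      then show ?thesis using PP by blast
    qed
  qed
next
  show "?B \<subseteq> ?A"
    unfolding maxpals_a_def maxpals_aa_def maxpals_b_def by blast
qed

end



lemma odd_set: "{m::nat. odd m \<and> m < M} = (\<lambda>k. 2*k+1) ` {..<M div 2}"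
proof (rule set_eqI, rule iffI)
  fix x assume "x \<in> {m::nat. odd m \<and> m < M}"
  then obtain k where "x = 2*k+1" "2*k+1 < M" by (auto elim!: oddE)
  then show "x \<in> (\<lambda>k. 2*k+1) ` {..<M div 2}" by (auto intro!: image_eqI[of _ _ k])
qed auto

lemma even_set: "{m::nat. even m \<and> 2 \<le> m \<and> m < M} = (\<lambda>k. 2*k+2) ` {..<(M - 1) div 2}"
proof (rule set_eqI, rule iffI)
  fix x assume "x \<in> {m::nat. even m \<and> 2 \<le> m \<and> m < M}"
  then obtain k0 where "x = 2*k0" "2 \<le> x" "x < M" by (auto elim!: evenE)
  then obtain k where "x = 2*k+2" "2*k+2 < M" by (intro that[of "k0 - 1"]) auto
  then show "x \<in> (\<lambda>k. 2*k+2) ` {..<(M - 1) div 2}" by (auto intro!: image_eqI[of _ _ k])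
qed auto

lemma card_odd: "card {m::nat. odd m \<and> m < M} = M div 2"
  by (simp add: odd_set card_image inj_on_def)

lemma card_even: "card {m::nat. even m \<and> 2 \<le> m \<and> m < M} = (M - 1) div 2"
  by (simp add: even_set card_image inj_on_def)

context L5 begin

lemma set_a:
  assumes "jM \<ge> 1" "r jM = max p p'"
  shows "maxpals_a X \<inter> orig_pals p p' Y = (\<lambda>m. replicate m La) ` {m. odd m \<and> m < max p p'}"
proof (rule set_eqI, rule iffI)
  fix P assume "P \<in> maxpals_a X \<inter> orig_pals p p' Y"
  then obtain m where "odd m \<and> m < max p p' \<and> P = replicate m La" using sub_a by blast
  then show "P \<in> (\<lambda>m. replicate m La) ` {m. odd m \<and> m < max p p'}" by auto
next
  fix P assume "P \<in> (\<lambda>m. replicate m La) ` {m. odd m \<and> m < max p p'}"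
  then obtain m where "odd m" "m < max p p'" "P = replicate m La" by auto
  then show "P \<in> maxpals_a X \<inter> orig_pals p p' Y" using sup_a[OF assms] by simp
qed

lemma set_aa:
  assumes "jM \<ge> 1" "r jM = max p p'"
  shows "maxpals_aa X \<inter> orig_pals p p' Y = (\<lambda>m. replicate m La) ` {m. even m \<and> 2 \<le> m \<and> m < max p p'}"
proof (rule set_eqI, rule iffI)
  fix P assume "P \<in> maxpals_aa X \<inter> orig_pals p p' Y"
  then obtain m where "even m \<and> 2 \<le> m \<and> m < max p p' \<and> P = replicate m La" using sub_aa by blast
  then show "P \<in> (\<lambda>m. replicate m La) ` {m. even m \<and> 2 \<le> m \<and> m < max p p'}" by auto
next
  fix P assume "P \<in> (\<lambda>m. replicate m La) ` {m. even m \<and> 2 \<le> m \<and> m < max p p'}"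
  then obtain m where "even m" "2 \<le> m" "m < max p p'" "P = replicate m La" by auto
  then show "P \<in> maxpals_aa X \<inter> orig_pals p p' Y" using sup_aa[OF assms] by simp
qed

lemma set_b:
  assumes "jb \<ge> 1" "Y jb \<noteq> Y (Suc jb)"
  shows "maxpals_b X \<inter> orig_pals p p' Y = {replicate (min p p') La @ [Lb] @ replicate (min p p') La}"
proof (rule set_eqI, rule iffI)
  fix P assume "P \<in> maxpals_b X \<inter> orig_pals p p' Y"
  then show "P \<in> {replicate (min p p') La @ [Lb] @ replicate (min p p') La}" using sub_b by simp
next
  fix P assume "P \<in> {replicate (min p p') La @ [Lb] @ replicate (min p p') La}"
  then show "P \<in> maxpals_b X \<inter> orig_pals p p' Y" using sup_b[OF assms] by simp
qed

end



lemma inj_rep: "inj_on (\<lambda>m. replicate m La) A"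
  unfolding inj_on_def by (metis length_replicate)

theorem lemma5:
  fixes p p' :: nat and Y :: "nat \<Rightarrow> letter"
  assumes "p \<ge> 1" and "p' \<ge> 1" and "p = p' + 1 \<or> p' = p + 1"
    and "sturmian Y"
    and "\<not> (\<exists>i. Y i = Lb \<and> Y (Suc i) = Lb)"
  shows "(finite (maxpals_b (morph_word p p' Y) \<inter> orig_pals p p' Y)
           \<and> card (maxpals_b (morph_word p p' Y) \<inter> orig_pals p p' Y) = 1)
    \<and> (let k = (if odd (p - 1) then p - 1 else p' - 1) in
           finite (maxpals_a (morph_word p p' Y) \<inter> orig_pals p p' Y)
           \<and> card (maxpals_a (morph_word p p' Y) \<inter> orig_pals p p' Y) = (k + 1) div 2)
    \<and> (let k = (if even (p - 1) then p - 1 else p' - 1) in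
           finite (maxpals_aa (morph_word p p' Y) \<inter> orig_pals p p' Y)
           \<and> card (maxpals_aa (morph_word p p' Y) \<inter> orig_pals p p' Y) = k div 2)
    \<and> (finite (maxpals (morph_word p p' Y) \<inter> orig_pals p p' Y)
           \<and> card (maxpals (morph_word p p' Y) \<inter> orig_pals p p' Y) = max p p')"
proof -
  have pne: "p \<noteq> p'" using assms(3) by auto
  interpret L5 p p' Y using assms(1,2,5) pne by unfold_locales auto
  obtain jb where jb: "jb \<ge> 1" "Y jb \<noteq> Y (Suc jb)"
  proof (rule ccontr)
    assume "\<not> thesis"
    have "\<forall>i\<ge>1. Y (i + 1) = Y i"
    proof (intro allI impI)
      fix i :: nat assume i1: "i \<ge> 1"
      show "Y (i + 1) = Y i"
      proof (rule ccontr)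
        assume "Y (i + 1) \<noteq> Y i"
        then have "Y i \<noteq> Y (Suc i)" by simp
        then show False using that[OF i1] \<open>\<not> thesis\<close> by blast
      qed
    qed
    then have "ult_periodic Y" unfolding ult_periodic_def by (intro exI[of _ 1]) auto
    then show False using assms(4) by (simp add: sturmian_def)
  qed
  obtain jM where jM: "jM \<ge> 1" "r jM = max p p'"
  proof (cases "r jb = max p p'")
    case True then show ?thesis using that jb by blast
  next
    case False
    have "r (Suc jb) = max p p'" using False jb(2) by (cases "Y jb"; cases "Y (Suc jb)") (auto simp: rl_def)
    then show ?thesis using that[of "Suc jb"] by simp
  qed
  define M where "M = max p p'"
  have M1: "M \<ge> 1" using assms(1) M_def by simp
  define A where "A = maxpals_a X \<inter> orig_pals p p' Y"
  define AA where "AA = maxpals_aa X \<inter> orig_pals p p' Y"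
  define B where "B = maxpals_b X \<inter> orig_pals p p' Y"
  have Aeq: "A = (\<lambda>m. replicate m La) ` {m. odd m \<and> m < M}" using set_a[OF jM] A_def M_def by simp
  have AAeq: "AA = (\<lambda>m. replicate m La) ` {m. even m \<and> 2 \<le> m \<and> m < M}" using set_aa[OF jM] AA_def M_def by simp
  have Beq: "B = {replicate (min p p') La @ [Lb] @ replicate (min p p') La}" using set_b[OF jb] B_def by simp
  have fA: "finite A" and cA: "card A = M div 2"
    using Aeq card_odd[of M] by (simp_all add: card_image inj_rep)
  have fAA: "finite AA" and cAA: "card AA = (M - 1) div 2"
    using AAeq card_even[of M] by (simp_all add: card_image inj_rep)
  have fB: "finite B" and cB: "card B = 1" using Beq by simp_all
  have d1: "A \<inter> AA = {}" using Aeq AAeq by auto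
  have nb: "replicate m La \<noteq> replicate (min p p') La @ [Lb] @ replicate (min p p') La" for m
  proof
    assume "replicate m La = replicate (min p p') La @ [Lb] @ replicate (min p p') La"
    then have "Lb \<in> set (replicate m La)" by simp
    then show False by simp
  qed
  have x1: "\<forall>x\<in>A \<union> AA. Lb \<notin> set x" using Aeq AAeq by auto
  have x2: "\<forall>x\<in>B. Lb \<in> set x" using Beq by simp
  have d2: "(A \<union> AA) \<inter> B = {}" using x1 x2 by blast
  have U: "maxpals X \<inter> orig_pals p p' Y = A \<union> AA \<union> B" using union3 A_def AA_def B_def by simp
  have cU: "card (A \<union> AA \<union> B) = M div 2 + (M - 1) div 2 + 1"
    using fA fAA fB d1 d2 cA cAA cB by (simp add: card_Un_disjoint)
  have ar: "M div 2 + (M - 1) div 2 + 1 = M" using M1 by presburger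
  have k1: "(let k = (if odd (p - 1) then p - 1 else p' - 1) in (k + 1) div 2) = M div 2"
  proof (cases "p = p' + 1")
    case True
    then show ?thesis unfolding Let_def M_def using assms(2) by presburger
  next
    case False
    then have "p' = p + 1" using assms(3) by simp
    then show ?thesis unfolding Let_def M_def using assms(1) by presburger
  qed
  have k2: "(let k = (if even (p - 1) then p - 1 else p' - 1) in k div 2) = (M - 1) div 2"
  proof (cases "p = p' + 1")
    case True
    then show ?thesis unfolding Let_def M_def using assms(2) by presburger
  next
    case False
    then have "p' = p + 1" using assms(3) by simp
    then show ?thesis unfolding Let_def M_def using assms(1) by presburger
  qed
  show ?thesis
    using fA cA fAA cAA fB cB U cU ar k1 k2
    unfolding A_def[symmetric] AA_def[symmetric] B_def[symmetric] M_def[symmetric] Let_def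
    by simp
qed



end
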